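(* Assume the setting in the context. Then there is a positive constant $\tilde C$, depending only on $n,\Omega,\Omega_0,\mathrm{dist}(\Omega_0,\partial\Omega),\varphi,\psi,\eta,D_\ast$, such that $$-\tilde C-D_\ast\Delta u_\varepsilon\leq f_\varepsilon\leq\tilde C\quad\text{in }\Omega_0.$$
   Context: Let $n\geq2$; let $\Omega_0,\Omega\subset\mathbb R^n$ be bounded, open, smooth, convex domains, $\Omega$ uniformly convex, $\overline{\Omega_0}\subset\Omega$. Let $\varphi\in C^5(\overline\Omega)$ be convex, $\psi\in C^3(\overline\Omega)$ with $\min_{\partial\Omega}\psi>0$. Let $F^0:\mathbb R^n\times\mathbb R\to\mathbb R$ be smooth with, for all $x\in\Omega_0$, $z,\tilde z\in\mathbb R$: $(\partial_zF^0(x,z)-\partial_zF^0(x,\tilde z))(z-\tilde z)\geq0$ and $|F^0(x,z)|+|\partial_zF^0(x,z)|\leq\eta(|z|)$, where $\eta:[0,\infty)\to[0,\infty)$ is continuous and increasing. Let $F^1:\mathbb R^n\times\mathbb R^n\to\mathbb R$ be smooth with, for all $x\in\Omega_0$, $\mathbf p\in\mathbb R^n$: $0\leq(F^1_{p_ip_j}(x,\mathbf p))\leq D_\ast I_n$ and $|F^1_{p_ix_i}(x,\mathbf p)|\leq D_\ast(|\mathbf p|+1)$ for each $i$ (no summation), with $D_\ast>0$. Let $\rho$ be a uniformly convex defining function of $\Omega$ ($\Omega=\{\rho<0\}$, $\rho=0$, $D\rho\neq0$ on $\partial\Omega$), and $\mu_\varepsilon=\varphi+\varepsilon^{1/(3n^2)}(e^\rho-1)$.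 For $\varepsilon>0$, the system $(\mathrm{P}_\varepsilon)$ for a uniformly convex $u_\varepsilon$ is: $\varepsilon U_\varepsilon^{ij}D_{ij}w_\varepsilon=f_\varepsilon$ in $\Omega$, $w_\varepsilon=(\det D^2u_\varepsilon)^{-1}$ in $\Omega$, $u_\varepsilon=\varphi$ on $\partial\Omega$, $w_\varepsilon=\psi$ on $\partial\Omega$, where $(U^{ij}_\varepsilon)=(\det D^2u_\varepsilon)(D^2u_\varepsilon)^{-1}$ and $f_\varepsilon=\big(\partial_zF^0(x,u_\varepsilon)-\sum_i\partial_{x_i}[\partial_{p_i}F^1(x,Du_\varepsilon)]\big)\chi_{\Omega_0}+\frac{u_\varepsilon-\mu_\varepsilon}{\varepsilon}\chi_{\Omega\setminus\Omega_0}$. Standing assumptions: $s\in(n,\infty)$ is fixed; $\varepsilon_0>0$ is a constant depending only on $n,\Omega,\Omega_0,\varphi,\psi,\eta,D_\ast,\mathrm{dist}(\Omega_0,\partial\Omega)$ such that for all $\varepsilon\leq\varepsilon_0$ every uniformly convex solution $u_\varepsilon\in W^{4,s}(\Omega)$ of $(\mathrm{P}_\varepsilon)$ satisfies $\|u_\varepsilon\|_{L^\infty(\Omega)}\leq C$ with $C$ independent of $\varepsilon$ (such $\varepsilon_0$ exists); $\varepsilon\in(0,\varepsilon_0]$ and $u_\varepsilon\in W^{4,s}(\Omega)$ is a uniformly convex solution of $(\mathrm{P}_\varepsilon)$. *)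

theory Defs
  imports "HOL-Analysis.Analysis"
begin

definition partial :: "'a::euclidean_space \<Rightarrow> ('a \<Rightarrow> real) \<Rightarrow> 'a \<Rightarrow> real" where
  "partial b f x = deriv (\<lambda>t. f (x + t *\<^sub>R b)) 0"

fun partials :: "'a::euclidean_space list \<Rightarrow> ('a \<Rightarrow> real) \<Rightarrow> 'a \<Rightarrow> real" where
  "partials [] f = f"
| "partials (b # bs) f = partial b (partials bs f)"

fun Ck :: "nat \<Rightarrow> 'a::euclidean_space set \<Rightarrow> ('a \<Rightarrow> real) \<Rightarrow> bool" where
  "Ck 0 S f = continuous_on S f"
| "Ck (Suc k) S f = ((\<forall>x\<in>S. f differentiable (at x)) \<and> (\<forall>b\<in>Basis. Ck k S (partial b f)))"

text \<open>C^k(closure S): C^k in S, all derivatives up to order k uniformly continuous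
  on S (hence extend continuously to the closure), f continuous on the closure.\<close>
definition Ck_bar :: "nat \<Rightarrow> 'a::euclidean_space set \<Rightarrow> ('a \<Rightarrow> real) \<Rightarrow> bool" where
  "Ck_bar k S f \<longleftrightarrow> Ck k S f \<and> continuous_on (closure S) f \<and>
     (\<forall>bs. set bs \<subseteq> Basis \<and> length bs \<le> k \<longrightarrow> uniformly_continuous_on S (partials bs f))"

definition smooth :: "('a::euclidean_space \<Rightarrow> real) \<Rightarrow> bool" where
  "smooth f \<longleftrightarrow> (\<forall>k. Ck k UNIV f)"

definition grad :: "(real^'n \<Rightarrow> real) \<Rightarrow> real^'n \<Rightarrow> real^'n" where
  "grad f x = (\<chi> i. partial (axis i 1) f x)"

definition hess :: "(real^'n \<Rightarrow> real) \<Rightarrow> real^'n \<Rightarrow> real^'n^'n" where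
  "hess f x = (\<chi> i j. partial (axis i 1) (partial (axis j 1) f) x)"

definition laplacian :: "(real^'n \<Rightarrow> real) \<Rightarrow> real^'n \<Rightarrow> real" where
  "laplacian f x = (\<Sum>i\<in>UNIV. partial (axis i 1) (partial (axis i 1) f) x)"

definition smooth_domain :: "(real^'n) set \<Rightarrow> bool" where
  "smooth_domain S \<longleftrightarrow> (\<exists>r. smooth r \<and> S = {x. r x < 0} \<and> (\<forall>x\<in>frontier S. r x = 0 \<and> grad r x \<noteq> 0))"

definition test_fun :: "(real^'n) set \<Rightarrow> (real^'n \<Rightarrow> real) \<Rightarrow> bool" where
  "test_fun S \<phi> \<longleftrightarrow> smooth \<phi> \<and> compact (closure {x. \<phi> x \<noteq> 0}) \<and> closure {x. \<phi> x \<noteq> 0} \<subseteq> S"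

definition Lp :: "real \<Rightarrow> (real^'n) set \<Rightarrow> (real^'n \<Rightarrow> real) \<Rightarrow> bool" where
  "Lp p S v \<longleftrightarrow> set_borel_measurable lborel S v \<and> set_integrable lborel S (\<lambda>x. \<bar>v x\<bar> powr p)"

definition weak_deriv :: "(real^'n) set \<Rightarrow> (real^'n) list \<Rightarrow> (real^'n \<Rightarrow> real) \<Rightarrow> (real^'n \<Rightarrow> real) \<Rightarrow> bool" where
  "weak_deriv S bs u v \<longleftrightarrow> (\<forall>\<phi>. test_fun S \<phi> \<longrightarrow>
      set_integrable lborel S (\<lambda>x. u x * partials bs \<phi> x) \<and>
      set_integrable lborel S (\<lambda>x. v x * \<phi> x) \<and>
      (LINT x:S|lborel. u x * partials bs \<phi> x) = (-1) ^ length bs * (LINT x:S|lborel. v x * \<phi> x))"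

definition sobolev :: "nat \<Rightarrow> real \<Rightarrow> (real^'n) set \<Rightarrow> (real^'n \<Rightarrow> real) \<Rightarrow> bool" where
  "sobolev k p S u \<longleftrightarrow> (\<forall>bs. set bs \<subseteq> Basis \<and> length bs \<le> k \<longrightarrow> (\<exists>v. Lp p S v \<and> weak_deriv S bs u v))"

definition mu_eps :: "(real^'n \<Rightarrow> real) \<Rightarrow> (real^'n \<Rightarrow> real) \<Rightarrow> real \<Rightarrow> real^'n \<Rightarrow> real" where
  "mu_eps \<phi> \<rho> \<epsilon> x = \<phi> x + \<epsilon> powr (1 / (3 * real (CARD('n))^2)) * (exp (\<rho> x) - 1)"

definition f_eps :: "(real^'n) set \<Rightarrow> (real^'n \<Rightarrow> real \<Rightarrow> real) \<Rightarrow> (real^'n \<Rightarrow> real^'n \<Rightarrow> real)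
    \<Rightarrow> (real^'n \<Rightarrow> real) \<Rightarrow> (real^'n \<Rightarrow> real) \<Rightarrow> real \<Rightarrow> (real^'n \<Rightarrow> real) \<Rightarrow> real^'n \<Rightarrow> real" where
  "f_eps \<Omega>0 F0 F1 \<phi> \<rho> \<epsilon> u x =
     (if x \<in> \<Omega>0 then
        deriv (F0 x) (u x) - (\<Sum>i\<in>UNIV. partial (axis i 1) (\<lambda>y. partial (axis i 1) (F1 y) (grad u y)) x)
      else (u x - mu_eps \<phi> \<rho> \<epsilon> x) / \<epsilon>)"

definition uniformly_convex_fun :: "(real^'n) set \<Rightarrow> (real^'n \<Rightarrow> real) \<Rightarrow> bool" where
  "uniformly_convex_fun S u \<longleftrightarrow> (\<exists>l>0. \<forall>x\<in>S. \<forall>\<xi>. \<xi> \<bullet> (hess u x *v \<xi>) \<ge> l * norm \<xi> ^ 2)"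

text \<open>u is a uniformly convex W^{4,s}(Omega) solution of (P_eps). u denotes the
  continuous representative, which lies in C^3(closure Omega) (Morrey, s > n).
  w = (det D^2 u)^{-1}; U = cofactor matrix of D^2 u; the fourth-order equation
  holds a.e. with weak second derivatives of w.\<close>
definition solves_P :: "(real^'n) set \<Rightarrow> (real^'n) set \<Rightarrow> (real^'n \<Rightarrow> real \<Rightarrow> real) \<Rightarrow> (real^'n \<Rightarrow> real^'n \<Rightarrow> real)
    \<Rightarrow> (real^'n \<Rightarrow> real) \<Rightarrow> (real^'n \<Rightarrow> real) \<Rightarrow> (real^'n \<Rightarrow> real) \<Rightarrow> real \<Rightarrow> real \<Rightarrow> (real^'n \<Rightarrow> real) \<Rightarrow> bool" where
  "solves_P \<Omega> \<Omega>0 F0 F1 \<phi> \<psi> \<rho> s \<epsilon> u \<longleftrightarrow>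
     sobolev 4 s \<Omega> u \<and> Ck_bar 3 \<Omega> u \<and> uniformly_convex_fun \<Omega> u \<and>
     (let w = (\<lambda>x. 1 / det (hess u x));
          U = (\<lambda>x. det (hess u x) *\<^sub>R matrix_inv (hess u x))
      in (\<exists>v. (\<forall>i j. weak_deriv \<Omega> [axis i 1, axis j 1] w (v i j)) \<and>
              (AE x in lborel. x \<in> \<Omega> \<longrightarrow>
                 \<epsilon> * (\<Sum>i\<in>UNIV. \<Sum>j\<in>UNIV. U x $ i $ j * v i j x) = f_eps \<Omega>0 F0 F1 \<phi> \<rho> \<epsilon> u x)) \<and>
         (\<forall>x0\<in>frontier \<Omega>. (u \<longlongrightarrow> \<phi> x0) (at x0 within \<Omega>) \<and> (w \<longlongrightarrow> \<psi> x0) (at x0 within \<Omega>)))"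

end

theory Submission
  imports Defs
begin


lemma line_deriv:
  fixes f :: "'a::euclidean_space \<Rightarrow> real"
  assumes "(f has_derivative f') (at (a + s *\<^sub>R b))"
  shows "((\<lambda>t. f (a + t *\<^sub>R b)) has_real_derivative f' b) (at s)"
proof -
  have l: "linear f'" using assms has_derivative_linear by blast
  have g: "((\<lambda>t. a + t *\<^sub>R b) has_derivative (\<lambda>t. t *\<^sub>R b)) (at s)"
    by (auto intro!: derivative_eq_intros)
  have "(f \<circ> (\<lambda>t. a + t *\<^sub>R b) has_derivative f' \<circ> (\<lambda>t. t *\<^sub>R b)) (at s)"
    by (rule diff_chain_at[OF g]) (simp add: assms)
  moreover have "f' \<circ> (\<lambda>t. t *\<^sub>R b) = (\<lambda>t. f' b * t)"
    using linear_scale[OF l] by (auto simp: fun_eq_iff)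
  ultimately show ?thesis by (simp add: has_field_derivative_def o_def)
qed

lemma partial_eq:
  fixes f :: "'a::euclidean_space \<Rightarrow> real"
  assumes "(f has_derivative f') (at y)"
  shows "partial b f y = f' b"
proof -
  have "((\<lambda>t. f (y + t *\<^sub>R b)) has_real_derivative f' b) (at 0)"
    by (rule line_deriv) (simp add: assms)
  then show ?thesis unfolding partial_def by (rule DERIV_imp_deriv)
qed

lemma lin_expand:
  fixes L :: "real^'n \<Rightarrow> real"
  assumes "linear L"
  shows "L h = (\<Sum>i\<in>UNIV. h$i * L (axis i 1))"
proof -
  have "L h = L (\<Sum>i\<in>UNIV. h$i *\<^sub>R axis i 1)"
    using basis_expansion[of h] by (simp add: scalar_mult_eq_scaleR)
  also have "\<dots> = (\<Sum>i\<in>UNIV. h$i * L (axis i 1))"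
    by (simp add: linear_sum[OF assms] linear_scale[OF assms])
  finally show ?thesis .
qed

lemma deriv_partials:
  fixes f :: "real^'n \<Rightarrow> real"
  assumes "(f has_derivative f') (at y)"
  shows "f' h = (\<Sum>i\<in>UNIV. h$i * partial (axis i 1) f y)"
proof -
  have l: "linear f'" using assms has_derivative_linear by blast
  show ?thesis unfolding lin_expand[OF l, of h] using partial_eq[OF assms] by simp
qed

lemma line_deriv_partials:
  fixes f :: "real^'n \<Rightarrow> real"
  assumes "f differentiable (at (a + s *\<^sub>R b))"
  shows "((\<lambda>t. f (a + t *\<^sub>R b)) has_real_derivative
     (\<Sum>i\<in>UNIV. b$i * partial (axis i 1) f (a + s *\<^sub>R b))) (at s)"
proof -
  obtain f' where f': "(f has_derivative f') (at (a + s *\<^sub>R b))"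
    using assms differentiable_def by blast
  show ?thesis using line_deriv[OF f'] deriv_partials[OF f'] by simp
qed

lemma line_deriv_partial:
  fixes f :: "'a::euclidean_space \<Rightarrow> real"
  assumes "f differentiable (at (a + s *\<^sub>R b))"
  shows "((\<lambda>t. f (a + t *\<^sub>R b)) has_real_derivative partial b f (a + s *\<^sub>R b)) (at s)"
proof -
  obtain f' where f': "(f has_derivative f') (at (a + s *\<^sub>R b))"
    using assms differentiable_def by blast
  show ?thesis using line_deriv[OF f'] partial_eq[OF f'] by simp
qed



lemma mixed_mvt:
  fixes f :: "'a::euclidean_space \<Rightarrow> real"
  assumes h: "h > 0"
    and inS: "\<And>s t. 0 \<le> s \<Longrightarrow> s \<le> h \<Longrightarrow> 0 \<le> t \<Longrightarrow> t \<le> h \<Longrightarrow> x + s *\<^sub>R a + t *\<^sub>R b \<in> T"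
    and df: "\<forall>y\<in>T. f differentiable (at y)"
    and da: "\<forall>y\<in>T. partial a f differentiable (at y)"
  shows "\<exists>s t. 0<s \<and> s<h \<and> 0<t \<and> t<h \<and>
    f (x + h *\<^sub>R a + h *\<^sub>R b) - f (x + h *\<^sub>R a) - f (x + h *\<^sub>R b) + f x
      = h * h * partial b (partial a f) (x + s *\<^sub>R a + t *\<^sub>R b)"
proof -
  define \<phi> where "\<phi> = (\<lambda>s. f ((x + h *\<^sub>R b) + s *\<^sub>R a) - f (x + s *\<^sub>R a))"
  have "(\<phi> has_real_derivative (partial a f ((x + h *\<^sub>R b) + s *\<^sub>R a) - partial a f (x + s *\<^sub>R a))) (at s)"
    if "0 \<le> s" "s \<le> h" for s
  proof -
    have e1: "x + h *\<^sub>R b + s *\<^sub>R a = x + s *\<^sub>R a + h *\<^sub>R b" by (simp add: algebra_simps)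
    have e2: "x + s *\<^sub>R a = x + s *\<^sub>R a + 0 *\<^sub>R b" by simp
    have m1: "x + h *\<^sub>R b + s *\<^sub>R a \<in> T" unfolding e1 using inS that h by simp
    have m2: "x + s *\<^sub>R a \<in> T" using inS[of s 0] that h by simp
    show ?thesis unfolding \<phi>_def
      by (intro DERIV_diff line_deriv_partial) (use m1 m2 df in auto)
  qed
  from MVT2[OF h, of \<phi>, OF this] obtain s1 where s1: "0 < s1" "s1 < h"
    "\<phi> h - \<phi> 0 = (h - 0) * (partial a f ((x + h *\<^sub>R b) + s1 *\<^sub>R a) - partial a f (x + s1 *\<^sub>R a))"
    by auto
  define \<psi> where "\<psi> = (\<lambda>t. partial a f ((x + s1 *\<^sub>R a) + t *\<^sub>R b))"
  have "(\<psi> has_real_derivative partial b (partial a f) ((x + s1 *\<^sub>R a) + t *\<^sub>R b)) (at t)"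
    if "0 \<le> t" "t \<le> h" for t
  proof -
    have m: "x + s1 *\<^sub>R a + t *\<^sub>R b \<in> T" using inS[of s1 t] that s1 by simp
    show ?thesis unfolding \<psi>_def by (rule line_deriv_partial) (use m da in auto)
  qed
  from MVT2[OF h, of \<psi>, OF this] obtain t1 where t1: "0 < t1" "t1 < h"
    "\<psi> h - \<psi> 0 = (h - 0) * partial b (partial a f) ((x + s1 *\<^sub>R a) + t1 *\<^sub>R b)"
    by auto
  have e3: "x + h *\<^sub>R b + s1 *\<^sub>R a = x + s1 *\<^sub>R a + h *\<^sub>R b" by (simp add: algebra_simps)
  have e4: "x + h *\<^sub>R b + h *\<^sub>R a = x + h *\<^sub>R a + h *\<^sub>R b" by (simp add: algebra_simps)
  have "f (x + h *\<^sub>R a + h *\<^sub>R b) - f (x + h *\<^sub>R a) - f (x + h *\<^sub>R b) + f x = \<phi> h - \<phi> 0"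
    unfolding \<phi>_def e4 by simp
  also have "\<dots> = h * (\<psi> h - \<psi> 0)" unfolding s1(3) unfolding \<psi>_def e3 by simp
  also have "\<dots> = h * h * partial b (partial a f) (x + s1 *\<^sub>R a + t1 *\<^sub>R b)"
    unfolding t1(3) by simp
  finally show ?thesis using s1 t1 by blast
qed

lemma schwarz:
  fixes f :: "'a::euclidean_space \<Rightarrow> real"
  assumes S: "open S" "x \<in> S"
    and df: "\<forall>y\<in>S. f differentiable (at y)"
    and da: "\<forall>y\<in>S. partial a f differentiable (at y)"
    and db: "\<forall>y\<in>S. partial b f differentiable (at y)"
    and ca: "continuous_on S (partial a (partial b f))"
    and cb: "continuous_on S (partial b (partial a f))"
  shows "partial a (partial b f) x = partial b (partial a f) x"
proof (rule ccontr)
  let ?A = "partial a (partial b f)" and ?B = "partial b (partial a f)"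
  assume ne: "?A x \<noteq> ?B x"
  define e where "e = \<bar>?A x - ?B x\<bar> / 3"
  have e: "e > 0" using ne by (simp add: e_def)
  obtain r where r: "r > 0" "ball x r \<subseteq> S" using S open_contains_ball by blast
  obtain d1 where d1: "d1 > 0" "\<forall>y\<in>S. dist y x < d1 \<longrightarrow> dist (?A y) (?A x) < e"
    using ca S(2) e unfolding continuous_on_iff by blast
  obtain d2 where d2: "d2 > 0" "\<forall>y\<in>S. dist y x < d2 \<longrightarrow> dist (?B y) (?B x) < e"
    using cb S(2) e unfolding continuous_on_iff by blast
  define \<rho> where "\<rho> = min r (min d1 d2)"
  have \<rho>: "\<rho> > 0" using r d1 d2 by (simp add: \<rho>_def)
  define h where "h = \<rho> / (2 * (norm a + norm b + 1))"
  have np: "2 * (norm a + norm b + 1) > 0" by (smt (verit) norm_ge_zero)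
  have hpos: "h > 0" unfolding h_def using \<rho> np by (rule divide_pos_pos)
  have hsmall: "h * (norm a + norm b) < \<rho>"
  proof -
    have "h * (norm a + norm b) < h * (2 * (norm a + norm b + 1))"
      using hpos by (intro mult_strict_left_mono) (smt (verit) norm_ge_zero, simp)
    also have "\<dots> = \<rho>" unfolding h_def using np by simp
    finally show ?thesis .
  qed
  have inball: "x + s *\<^sub>R c1 + t *\<^sub>R c2 \<in> ball x \<rho>"
    if "0 \<le> s" "s \<le> h" "0 \<le> t" "t \<le> h" "{c1, c2} = {a, b}" for s t c1 c2
  proof -
    have "norm (s *\<^sub>R c1 + t *\<^sub>R c2) \<le> norm (s *\<^sub>R c1) + norm (t *\<^sub>R c2)" by (rule norm_triangle_ineq)
    also have "\<dots> = s * norm c1 + t * norm c2" using that by simp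
    also have "\<dots> \<le> h * norm c1 + h * norm c2"
      using that by (intro add_mono mult_right_mono) auto
    also have "\<dots> = h * (norm a + norm b)" using that(5)
      by (auto simp: doubleton_eq_iff algebra_simps)
    finally have "norm (s *\<^sub>R c1 + t *\<^sub>R c2) < \<rho>" using hsmall by linarith
    moreover have "dist x (x + s *\<^sub>R c1 + t *\<^sub>R c2) = norm (s *\<^sub>R c1 + t *\<^sub>R c2)"
      by (simp add: dist_norm add.assoc norm_minus_commute add.commute)
    ultimately show ?thesis by simp
  qed
  have bS: "ball x \<rho> \<subseteq> S" using r \<rho>_def by auto
  obtain s1 t1 where st1: "0<s1" "s1<h" "0<t1" "t1<h"
    "f (x + h *\<^sub>R a + h *\<^sub>R b) - f (x + h *\<^sub>R a) - f (x + h *\<^sub>R b) + f x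
      = h * h * ?B (x + s1 *\<^sub>R a + t1 *\<^sub>R b)"
    using mixed_mvt[OF hpos, of x a b S f] inball[of _ _ a b] bS df da by blast
  obtain s2 t2 where st2: "0<s2" "s2<h" "0<t2" "t2<h"
    "f (x + h *\<^sub>R b + h *\<^sub>R a) - f (x + h *\<^sub>R b) - f (x + h *\<^sub>R a) + f x
      = h * h * ?A (x + s2 *\<^sub>R b + t2 *\<^sub>R a)"
    using mixed_mvt[OF hpos, of x b a S f] inball[of _ _ b a] bS df db by blast
  have q1: "x + s1 *\<^sub>R a + t1 *\<^sub>R b \<in> ball x \<rho>" using inball[of s1 t1 a b] st1 by simp
  have q2: "x + s2 *\<^sub>R b + t2 *\<^sub>R a \<in> ball x \<rho>" using inball[of s2 t2 b a] st2 by auto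
  have e5: "x + h *\<^sub>R b + h *\<^sub>R a = x + h *\<^sub>R a + h *\<^sub>R b" by (simp add: algebra_simps)
  have eq: "?B (x + s1 *\<^sub>R a + t1 *\<^sub>R b) = ?A (x + s2 *\<^sub>R b + t2 *\<^sub>R a)"
  proof -
    have "h * h * ?B (x + s1 *\<^sub>R a + t1 *\<^sub>R b) = h * h * ?A (x + s2 *\<^sub>R b + t2 *\<^sub>R a)"
      using st1(5) st2(5) unfolding e5 by linarith
    then show ?thesis using hpos by simp
  qed
  have "dist (?A (x + s2 *\<^sub>R b + t2 *\<^sub>R a)) (?A x) < e"
  proof -
    have "x + s2 *\<^sub>R b + t2 *\<^sub>R a \<in> S" using q2 bS by blast
    moreover have "dist (x + s2 *\<^sub>R b + t2 *\<^sub>R a) x < d1" using q2 \<rho>_def by (simp add: dist_commute)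
    ultimately show ?thesis using d1 by blast
  qed
  moreover have "dist (?B (x + s1 *\<^sub>R a + t1 *\<^sub>R b)) (?B x) < e"
  proof -
    have "x + s1 *\<^sub>R a + t1 *\<^sub>R b \<in> S" using q1 bS by blast
    moreover have "dist (x + s1 *\<^sub>R a + t1 *\<^sub>R b) x < d2" using q1 \<rho>_def by (simp add: dist_commute)
    ultimately show ?thesis using d2 by blast
  qed
  ultimately have "\<bar>?A x - ?B x\<bar> < 2 * e" using eq by (simp add: dist_real_def)
  then show False using e by (simp add: e_def)
qed



definition qf :: "('n::finite \<Rightarrow> 'n \<Rightarrow> real) \<Rightarrow> ('n \<Rightarrow> real) \<Rightarrow> real" where
  "qf A x = (\<Sum>i\<in>UNIV. \<Sum>j\<in>UNIV. A i j * x i * x j)"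

lemma mult_if0: "(a::real) * (if P then t else 0) = (if P then a * t else 0)"
  "(if P then t else 0) * (a::real) = (if P then t * a else 0)" by simp_all

lemma qf_shift:
  fixes A :: "'n::finite \<Rightarrow> 'n \<Rightarrow> real"
  assumes sym: "\<And>i j. A i j = A j i"
  shows "qf A (\<lambda>i. x i + (if i = k then t else 0)) = qf A x + 2 * t * (\<Sum>j\<in>UNIV. A k j * x j) + t^2 * A k k"
proof -
  define d where "d = (\<lambda>i::'n. if i = k then t else 0)"
  have "qf A (\<lambda>i. x i + d i) = (\<Sum>i\<in>UNIV. \<Sum>j\<in>UNIV. A i j * x i * x j + A i j * x i * d j + A i j * d i * x j + A i j * d i * d j)"
    unfolding qf_def by (intro sum.cong refl) (simp add: algebra_simps)
  also have "\<dots> = qf A x + (\<Sum>i\<in>UNIV. \<Sum>j\<in>UNIV. A i j * x i * d j) + (\<Sum>i\<in>UNIV. \<Sum>j\<in>UNIV. A i j * d i * x j)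
       + (\<Sum>i\<in>UNIV. \<Sum>j\<in>UNIV. A i j * d i * d j)"
    unfolding qf_def by (simp add: sum.distrib)
  also have "(\<Sum>i\<in>UNIV. \<Sum>j\<in>UNIV. A i j * x i * d j) = t * (\<Sum>j\<in>UNIV. A k j * x j)"
    unfolding d_def by (simp add: mult_if0 sum_distrib_left sym mult_ac)
  also have "(\<Sum>i\<in>UNIV. \<Sum>j\<in>UNIV. A i j * d i * x j) = (\<Sum>i\<in>UNIV. d i * (\<Sum>j\<in>UNIV. A i j * x j))"
    by (simp add: sum_distrib_left mult_ac)
  also have "\<dots> = t * (\<Sum>j\<in>UNIV. A k j * x j)"
    unfolding d_def by (simp add: mult_if0)
  also have "(\<Sum>i\<in>UNIV. \<Sum>j\<in>UNIV. A i j * d i * d j) = (\<Sum>i\<in>UNIV. d i * (\<Sum>j\<in>UNIV. A i j * d j))"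
    by (simp add: sum_distrib_left mult_ac)
  also have "\<dots> = t * (\<Sum>j\<in>UNIV. A k j * d j)"
    unfolding d_def by (simp add: mult_if0)
  also have "\<dots> = t^2 * A k k"
    unfolding d_def by (simp add: mult_if0 power2_eq_square)
  finally show ?thesis unfolding d_def by simp
qed

lemma psd_frob_aux:
  fixes B :: "'n::finite \<Rightarrow> 'n \<Rightarrow> real"
  assumes psdB: "\<And>\<xi>. 0 \<le> qf B \<xi>"
  shows "finite S \<Longrightarrow> (\<And>i j. A i j = A j i) \<Longrightarrow> (\<And>\<xi>. 0 \<le> qf A \<xi>) \<Longrightarrow> (\<And>i j. i \<notin> S \<Longrightarrow> A i j = 0)
     \<Longrightarrow> 0 \<le> (\<Sum>i\<in>UNIV. \<Sum>j\<in>UNIV. A i j * B i j)"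
proof (induction S arbitrary: A rule: finite_induct)
  case empty
  then show ?case by simp
next
  case (insert k S)
  note sym = insert.prems(1) and psd = insert.prems(2) and supp = insert.prems(3)
  define a where "a = (\<lambda>j. A k j)"
  have sh: "qf A (\<lambda>i. x i + (if i = k then t else 0)) = qf A x + 2*t*(\<Sum>j\<in>UNIV. a j * x j) + t^2 * A k k" for x t
    using qf_shift[of A x k t] sym unfolding a_def by blast
  have "qf A (\<lambda>i. 0 + (if i = k then 1 else 0)) = A k k"
    using sh[of "\<lambda>_. 0" 1] by (simp add: qf_def)
  then have Akk: "A k k \<ge> 0" using psd by metis
  show ?case
  proof (cases "A k k = 0")
    case True
    have az: "a j = 0" for j
    proof (rule ccontr)
      assume nz: "a j \<noteq> 0"
      define x where "x = (\<lambda>i. if i = j then 1 else (0::real))"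
      have ax: "(\<Sum>i\<in>UNIV. a i * x i) = a j" by (simp add: x_def mult_if0)
      define t where "t = - (qf A x + 1) / (2 * a j)"
      have "0 \<le> qf A (\<lambda>i. x i + (if i = k then t else 0))" by (rule psd)
      also have "\<dots> = qf A x + 2*t*a j" using sh[of x t] ax True by simp
      also have "\<dots> = -1" using nz by (simp add: t_def field_simps)
      finally show False by simp
    qed
    show ?thesis
    proof (rule insert.IH)
      show "A i j = 0" if "i \<notin> S" for i j
      proof (cases "i = k")
        case True then show ?thesis using az[of j] by (simp add: a_def)
      next
        case False then show ?thesis using supp[of i j] that by simp
      qed
    qed (use sym psd in auto)
  next
    case False
    then have pos: "A k k > 0" using Akk by simp
    define A' where "A' = (\<lambda>i j. A i j - a i * a j / A k k)"
    have qA': "qf A' x = qf A x - (\<Sum>i\<in>UNIV. a i * x i)^2 / A k k" for x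
    proof -
      have "qf A' x = (\<Sum>i\<in>UNIV. \<Sum>j\<in>UNIV. A i j * x i * x j - (a i * x i) * (a j * x j) / A k k)"
        unfolding qf_def A'_def by (intro sum.cong refl) (simp add: algebra_simps)
      also have "\<dots> = qf A x - (\<Sum>i\<in>UNIV. \<Sum>j\<in>UNIV. (a i * x i) * (a j * x j)) / A k k"
        unfolding qf_def by (simp add: sum_subtractf sum_divide_distrib)
      also have "(\<Sum>i\<in>UNIV. \<Sum>j\<in>UNIV. (a i * x i) * (a j * x j)) = (\<Sum>i\<in>UNIV. a i * x i)^2"
        by (simp add: power2_eq_square sum_product)
      finally show ?thesis .
    qed
    have psd': "0 \<le> qf A' x" for x
    proof -
      define s where "s = (\<Sum>i\<in>UNIV. a i * x i)"
      have "0 \<le> qf A (\<lambda>i. x i + (if i = k then - s / A k k else 0))" by (rule psd)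
      also have "\<dots> = qf A x + 2 * (- s / A k k) * s + (- s / A k k)^2 * A k k"
        using sh[of x "- s / A k k"] unfolding s_def by simp
      also have "\<dots> = qf A x - s^2 / A k k" using pos by (simp add: field_simps power2_eq_square)
      also have "\<dots> = qf A' x" using qA'[of x] unfolding s_def by simp
      finally show ?thesis .
    qed
    have sym': "A' i j = A' j i" for i j unfolding A'_def using sym[of i j] by (simp add: mult.commute)
    have supp': "A' i j = 0" if "i \<notin> S" for i j
    proof (cases "i = k")
      case True then show ?thesis using pos by (simp add: A'_def a_def)
    next
      case False
      then have "A i j = 0" "a i = 0" using supp[of i j] supp[of i k] sym[of k i] that by (simp_all add: a_def)
      then show ?thesis by (simp add: A'_def)
    qed
    have IH: "0 \<le> (\<Sum>i\<in>UNIV. \<Sum>j\<in>UNIV. A' i j * B i j)"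
      by (rule insert.IH) (use sym' psd' supp' in auto)
    have "(\<Sum>i\<in>UNIV. \<Sum>j\<in>UNIV. A i j * B i j)
        = (\<Sum>i\<in>UNIV. \<Sum>j\<in>UNIV. A' i j * B i j + B i j * a i * a j / A k k)"
      unfolding A'_def by (intro sum.cong refl) (simp add: algebra_simps)
    also have "\<dots> = (\<Sum>i\<in>UNIV. \<Sum>j\<in>UNIV. A' i j * B i j) + qf B a / A k k"
      unfolding qf_def by (simp add: sum.distrib sum_divide_distrib)
    finally show ?thesis using IH psdB[of a] pos by simp
  qed
qed

lemma psd_frob:
  fixes A B :: "'n::finite \<Rightarrow> 'n \<Rightarrow> real"
  assumes "\<And>i j. A i j = A j i" "\<And>\<xi>. 0 \<le> qf A \<xi>" "\<And>\<xi>. 0 \<le> qf B \<xi>"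
  shows "0 \<le> (\<Sum>i\<in>UNIV. \<Sum>j\<in>UNIV. A i j * B i j)"
  using psd_frob_aux[of B UNIV A] assms by auto



lemma quad_hess:
  fixes u :: "real^'n \<Rightarrow> real"
  shows "e \<bullet> (hess u y *v e) = (\<Sum>j\<in>UNIV. e$j * (\<Sum>i\<in>UNIV. e$i * partial (axis i 1) (partial (axis j 1) u) y))"
proof -
  have "e \<bullet> (hess u y *v e) = (\<Sum>i\<in>UNIV. e$i * (\<Sum>j\<in>UNIV. partial (axis i 1) (partial (axis j 1) u) y * e$j))"
    by (simp add: inner_vec_def matrix_vector_mult_def hess_def)
  also have "\<dots> = (\<Sum>i\<in>UNIV. \<Sum>j\<in>UNIV. e$j * (e$i * partial (axis i 1) (partial (axis j 1) u) y))"
    by (simp add: sum_distrib_left mult_ac)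
  also have "\<dots> = (\<Sum>j\<in>UNIV. e$j * (\<Sum>i\<in>UNIV. e$i * partial (axis i 1) (partial (axis j 1) u) y))"
    by (subst sum.swap) (simp add: sum_distrib_left)
  finally show ?thesis .
qed

lemma grad_bound:
  fixes u :: "real^'n \<Rightarrow> real"
  assumes S: "open S" and ball: "cball x d \<subseteq> S" and d: "d > 0"
    and du: "\<forall>y\<in>S. u differentiable (at y)"
    and dp: "\<forall>y\<in>S. \<forall>j. partial (axis j 1) u differentiable (at y)"
    and H: "\<forall>y\<in>S. \<forall>\<xi>. \<xi> \<bullet> (hess u y *v \<xi>) \<ge> 0"
    and C: "\<forall>y\<in>S. \<bar>u y\<bar> \<le> C"
  shows "norm (grad u x) \<le> 2 * C / d"
proof -
  define p where "p = grad u x"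
  have xS: "x \<in> S" using ball d by auto
  have C0: "C \<ge> 0" using C xS by force
  show ?thesis
  proof (cases "p = 0")
    case True then show ?thesis using C0 d by (simp add: p_def)
  next
    case False
    define e where "e = p /\<^sub>R norm p"
    have ne: "norm e = 1" using False by (simp add: e_def)
    have pts: "x + t *\<^sub>R e \<in> S" if "0 \<le> t" "t \<le> d" for t
    proof -
      have "dist x (x + t *\<^sub>R e) = t" using ne that by (simp add: dist_norm)
      then show ?thesis using ball that by auto
    qed
    define g where "g = (\<lambda>t. u (x + t *\<^sub>R e))"
    define g1 where "g1 = (\<lambda>t. \<Sum>j\<in>UNIV. e$j * partial (axis j 1) u (x + t *\<^sub>R e))"
    have dg: "(g has_real_derivative g1 t) (at t)" if "0 \<le> t" "t \<le> d" for t
      unfolding g_def g1_def by (rule line_deriv_partials) (use du pts that in auto)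
    have dg1: "(g1 has_real_derivative e \<bullet> (hess u (x + t *\<^sub>R e) *v e)) (at t)" if "0 \<le> t" "t \<le> d" for t
    proof -
      have "(g1 has_real_derivative (\<Sum>j\<in>UNIV. e$j * (\<Sum>i\<in>UNIV. e$i * partial (axis i 1) (partial (axis j 1) u) (x + t *\<^sub>R e)))) (at t)"
        unfolding g1_def
        by (intro DERIV_sum DERIV_cmult line_deriv_partials) (use dp pts that in auto)
      then show ?thesis by (simp add: quad_hess)
    qed
    have mono: "g1 0 \<le> g1 z" if "0 \<le> z" "z \<le> d" for z
    proof (rule DERIV_nonneg_imp_nondecreasing[of 0 z g1])
      fix t assume t: "0 \<le> t" "t \<le> z"
      then have "t \<le> d" using that by simp
      then show "\<exists>y. (g1 has_real_derivative y) (at t) \<and> y \<ge> 0"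
        using dg1[of t] H pts[of t] t by blast
    qed (use that in simp)
    obtain z where z: "0 < z" "z < d" "g d - g 0 = (d - 0) * g1 z"
      using MVT2[OF d, of g g1] dg by auto
    have "g1 0 = (\<Sum>j\<in>UNIV. p$j * p$j) / norm p"
      by (simp add: g1_def e_def p_def grad_def sum_divide_distrib divide_inverse sum_distrib_left sum_distrib_right mult_ac)
    also have "(\<Sum>j\<in>UNIV. p$j * p$j) = norm p ^ 2"
      by (simp add: power2_norm_eq_inner inner_vec_def)
    finally have "g1 0 = norm p" by (simp add: power2_eq_square)
    then have "d * norm p \<le> g d - g 0" using z mono[of z] d by (simp add: mult_left_mono)
    also have "\<dots> \<le> 2 * C" using C pts[of d] pts[of 0] d unfolding g_def by (smt (verit))
    finally have "d * norm p \<le> 2 * C" .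
    then show ?thesis using d by (simp add: p_def field_simps mult.commute)
  qed
qed



lemma F1a:
  fixes F1 :: "real^'n \<Rightarrow> real^'n \<Rightarrow> real"
  shows "partial b (F1 y) q = partial (0, b) (\<lambda>xp. F1 (fst xp) (snd xp)) (y, q)"
  unfolding partial_def by simp

lemma F1b:
  fixes F1 :: "real^'n \<Rightarrow> real^'n \<Rightarrow> real"
  shows "partial c (partial b (F1 x)) p = partial (0, c) (partial (0, b) (\<lambda>xp. F1 (fst xp) (snd xp))) (x, p)"
  by (simp add: F1a partial_def[of c] partial_def[of "(0,c)"])

lemma F1c:
  fixes F1 :: "real^'n \<Rightarrow> real^'n \<Rightarrow> real"
  shows "partial c (\<lambda>y. partial b (F1 y) p) x = partial (c, 0) (partial (0, b) (\<lambda>xp. F1 (fst xp) (snd xp))) (x, p)"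
  by (simp add: F1a partial_def[of c] partial_def[of "(c,0)"])

lemma grad_line_vd:
  fixes u :: "real^'n \<Rightarrow> real"
  assumes dp: "\<forall>j. partial (axis j 1) u differentiable (at x)"
  shows "((\<lambda>t. grad u (x + t *\<^sub>R e)) has_vector_derivative (\<chi> j. partial e (partial (axis j 1) u) x)) (at 0)"
  unfolding has_vector_derivative_def
proof (subst has_derivative_componentwise_within, intro ballI)
  fix b :: "real^'n" assume "b \<in> Basis"
  then obtain j where b: "b = axis j 1" by (auto simp: Basis_vec_def)
  have "((\<lambda>t. partial (axis j 1) u (x + t *\<^sub>R e)) has_real_derivative partial e (partial (axis j 1) u) (x + 0 *\<^sub>R e)) (at 0)"
    by (rule line_deriv_partial) (use dp in simp)
  note ld = this
  have "((\<lambda>t. partial (axis j 1) u (x + t *\<^sub>R e)) has_derivative (\<lambda>h. h * partial e (partial (axis j 1) u) x)) (at 0)"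
  proof -
    have "(*) (partial e (partial (axis j 1) u) x) = (\<lambda>h. h * partial e (partial (axis j 1) u) x)"
      by (auto simp: fun_eq_iff)
    with ld show ?thesis by (simp add: has_field_derivative_def)
  qed
  then show "((\<lambda>t. grad u (x + t *\<^sub>R e) \<bullet> b) has_derivative (\<lambda>h. h *\<^sub>R (\<chi> j. partial e (partial (axis j 1) u) x) \<bullet> b)) (at 0 within UNIV)"
    by (simp add: b inner_axis grad_def)
qed

lemma chain_F1:
  fixes F1 :: "real^'n \<Rightarrow> real^'n \<Rightarrow> real" and u :: "real^'n \<Rightarrow> real"
  assumes dP: "partial (0, axis i 1) (\<lambda>xp. F1 (fst xp) (snd xp)) differentiable (at (x, grad u x))"
    and dp: "\<forall>j. partial (axis j 1) u differentiable (at x)"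
  shows "partial (axis i 1) (\<lambda>y. partial (axis i 1) (F1 y) (grad u y)) x
     = partial (axis i 1) (\<lambda>y. partial (axis i 1) (F1 y) (grad u x)) x
       + (\<Sum>j\<in>UNIV. hess u x $ i $ j * partial (axis j 1) (partial (axis i 1) (F1 x)) (grad u x))"
proof -
  define P where "P = partial (0, axis i 1) (\<lambda>xp. F1 (fst xp) (snd xp))"
  define p where "p = grad u x"
  define e :: "real^'n" where "e = axis i 1"
  define v where "v = (\<chi> j. partial e (partial (axis j 1) u) x)"
  obtain D where D: "(P has_derivative D) (at (x, p))" using dP unfolding P_def p_def differentiable_def by blast
  have lD: "linear D" using D has_derivative_linear by blast
  define \<gamma> where "\<gamma> = (\<lambda>t. (x + t *\<^sub>R e, grad u (x + t *\<^sub>R e)))"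
  have g: "(\<gamma> has_vector_derivative (e, v)) (at 0)"
    unfolding \<gamma>_def v_def
    by (intro has_vector_derivative_Pair grad_line_vd dp) (auto intro!: derivative_eq_intros)
  have D': "(P has_derivative D) (at (\<gamma> 0))" using D by (simp add: \<gamma>_def p_def)
  have "((P \<circ> \<gamma>) has_derivative D \<circ> (\<lambda>h. h *\<^sub>R (e, v))) (at 0)"
    using diff_chain_at[OF g[unfolded has_vector_derivative_def] D'] .
  moreover have "D \<circ> (\<lambda>h. h *\<^sub>R (e, v)) = (\<lambda>h. D (e, v) * h)"
    using linear_scale[OF lD] by (auto simp: fun_eq_iff)
  ultimately have "((P \<circ> \<gamma>) has_real_derivative D (e, v)) (at 0)"
    by (simp add: has_field_derivative_def)
  then have lhs: "partial (axis i 1) (\<lambda>y. partial (axis i 1) (F1 y) (grad u y)) x = D (e, v)"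
    unfolding partial_def[of "axis i 1" "\<lambda>y. partial (axis i 1) (F1 y) (grad u y)"]
    by (intro DERIV_imp_deriv) (simp add: o_def \<gamma>_def P_def F1a e_def)
  have "D (e, v) = D (e, 0) + D (0, v)" using linear_add[OF lD, of "(e,0)" "(0,v)"] by simp
  moreover have "D (e, 0) = partial (axis i 1) (\<lambda>y. partial (axis i 1) (F1 y) p) x"
    using partial_eq[OF D, of "(e,0)"] by (simp add: F1c P_def e_def)
  moreover have "D (0, v) = (\<Sum>j\<in>UNIV. v$j * D (0, axis j 1))"
  proof -
    have l0: "linear (\<lambda>h::real^'n. (0::real^'n, h))" by (simp add: linear_iff)
    have "linear (D \<circ> (\<lambda>h::real^'n. (0::real^'n, h)))" by (rule linear_compose[OF l0 lD])
    then have "linear (\<lambda>h. D (0, h))" by (simp add: o_def)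
    from lin_expand[OF this] show ?thesis .
  qed
  moreover have "D (0, axis j 1) = partial (axis j 1) (partial (axis i 1) (F1 x)) p" for j
    using partial_eq[OF D, of "(0, axis j 1)"] by (simp add: F1b P_def)
  moreover have "v$j = hess u x $ i $ j" for j by (simp add: v_def hess_def e_def)
  ultimately show ?thesis using lhs by (simp add: p_def)
qed



lemma Ck3_facts:
  fixes u :: "real^'n \<Rightarrow> real"
  assumes "Ck 3 S u"
  shows "\<forall>y\<in>S. u differentiable (at y)"
    "\<forall>y\<in>S. \<forall>j. partial (axis j 1) u differentiable (at y)"
    "\<forall>i j. continuous_on S (partial (axis i 1) (partial (axis j 1) u))"
proof -
  have c: "Ck (Suc (Suc (Suc 0))) S u" using assms by (simp add: numeral_3_eq_3)
  then show "\<forall>y\<in>S. u differentiable (at y)" by simp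
  show "\<forall>y\<in>S. \<forall>j. partial (axis j 1) u differentiable (at y)" using c by simp
  show "\<forall>i j. continuous_on S (partial (axis i 1) (partial (axis j 1) u))"
  proof (intro allI)
    fix i j :: 'n
    have "Ck (Suc 0) S (partial (axis i 1) (partial (axis j 1) u))" using c by simp
    then have "\<forall>y\<in>S. partial (axis i 1) (partial (axis j 1) u) differentiable (at y)" by simp
    then show "continuous_on S (partial (axis i 1) (partial (axis j 1) u))"
      by (meson continuous_at_imp_continuous_on differentiable_imp_continuous_within)
  qed
qed

lemma smooth_partial_diff:
  fixes G :: "'a::euclidean_space \<Rightarrow> real"
  assumes "smooth G" "b \<in> Basis"
  shows "partial b G differentiable (at z)"
proof -
  have "Ck (Suc (Suc 0)) UNIV G" using assms unfolding smooth_def by blast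
  then show ?thesis using assms(2) by simp
qed

lemma qf_vec:
  fixes H :: "real^'n^'n"
  shows "qf (\<lambda>i j. H$i$j) \<xi> = (\<chi> i. \<xi> i) \<bullet> (H *v (\<chi> i. \<xi> i))"
  by (simp add: qf_def inner_vec_def matrix_vector_mult_def sum_distrib_left mult_ac)

lemma norm_sq_vec:
  fixes \<xi> :: "'n::finite \<Rightarrow> real"
  shows "norm ((\<chi> i. \<xi> i) :: real^'n) ^ 2 = (\<Sum>i\<in>UNIV. \<xi> i * \<xi> i)"
  by (simp add: power2_norm_eq_inner inner_vec_def)

lemma pointwise:
  fixes u :: "real^'n \<Rightarrow> real" and F1 :: "real^'n \<Rightarrow> real^'n \<Rightarrow> real"
  assumes S: "open S" and ball: "cball x d \<subseteq> S" and d: "d > 0"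
    and u3: "Ck 3 S u"
    and cvx: "\<forall>y\<in>S. \<forall>\<xi>. \<xi> \<bullet> (hess u y *v \<xi>) \<ge> 0"
    and uC: "\<forall>y\<in>S. \<bar>u y\<bar> \<le> C"
    and sm: "smooth (\<lambda>xp::(real^'n) \<times> (real^'n). F1 (fst xp) (snd xp))"
    and Mpos: "\<forall>p \<xi>. 0 \<le> (\<Sum>i\<in>UNIV. \<Sum>j\<in>UNIV.
            partial (axis i 1) (partial (axis j 1) (F1 x)) p * \<xi> $ i * \<xi> $ j)"
    and Mle: "\<forall>p \<xi>. (\<Sum>i\<in>UNIV. \<Sum>j\<in>UNIV.
            partial (axis i 1) (partial (axis j 1) (F1 x)) p * \<xi> $ i * \<xi> $ j) \<le> Dstar * norm \<xi> ^ 2"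
    and Tb: "\<forall>p i. \<bar>partial (axis i 1) (\<lambda>y. partial (axis i 1) (F1 y) p) x\<bar> \<le> Dstar * (norm p + 1)"
    and Dpos: "Dstar > 0"
  shows "- (real CARD('n) * (Dstar * (2*C/d + 1))) - Dstar * laplacian u x
           \<le> - (\<Sum>i\<in>UNIV. partial (axis i 1) (\<lambda>y. partial (axis i 1) (F1 y) (grad u y)) x)
       \<and> - (\<Sum>i\<in>UNIV. partial (axis i 1) (\<lambda>y. partial (axis i 1) (F1 y) (grad u y)) x)
           \<le> real CARD('n) * (Dstar * (2*C/d + 1))"
proof -
  note f3 = Ck3_facts[OF u3]
  note du = f3(1) and dp = f3(2) and cpp = f3(3)
  have xS: "x \<in> S" using ball d by auto
  define p where "p = grad u x"
  have np: "norm p \<le> 2 * C / d" unfolding p_def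
    by (rule grad_bound[OF S ball d du dp cvx uC])
  define H where "H = hess u x"
  have sym: "H$i$j = H$j$i" for i j
    unfolding H_def hess_def
    using schwarz[OF S xS du, of "axis i 1" "axis j 1"] dp cpp by simp
  define Mf where "Mf = (\<lambda>i j. partial (axis i 1) (partial (axis j 1) (F1 x)) p)"
  define T where "T = (\<lambda>i. partial (axis i 1) (\<lambda>y. partial (axis i 1) (F1 y) p) x)"
  have chain: "partial (axis i 1) (\<lambda>y. partial (axis i 1) (F1 y) (grad u y)) x
      = T i + (\<Sum>j\<in>UNIV. H$i$j * Mf j i)" for i
  proof -
    have b: "(0::real^'n, axis i (1::real)) \<in> Basis" by (simp add: Basis_prod_def)
    have dxp: "\<forall>j. partial (axis j 1) u differentiable (at x)" using dp xS by blast
    show ?thesis using chain_F1[OF smooth_partial_diff[OF sm b] dxp]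
      by (simp add: T_def Mf_def H_def p_def)
  qed
  define S2 where "S2 = (\<Sum>i\<in>UNIV. \<Sum>j\<in>UNIV. H$i$j * Mf i j)"
  have G: "(\<Sum>i\<in>UNIV. partial (axis i 1) (\<lambda>y. partial (axis i 1) (F1 y) (grad u y)) x)
      = (\<Sum>i\<in>UNIV. T i) + S2"
  proof -
    have "(\<Sum>i\<in>UNIV. partial (axis i 1) (\<lambda>y. partial (axis i 1) (F1 y) (grad u y)) x)
        = (\<Sum>i\<in>UNIV. T i) + (\<Sum>i\<in>UNIV. \<Sum>j\<in>UNIV. H$i$j * Mf j i)"
      by (simp add: chain sum.distrib)
    also have "(\<Sum>i\<in>UNIV. \<Sum>j\<in>UNIV. H$i$j * Mf j i) = (\<Sum>j\<in>UNIV. \<Sum>i\<in>UNIV. H$j$i * Mf j i)"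
      by (subst sum.swap) (simp add: sym)
    finally show ?thesis unfolding S2_def .
  qed
  define K where "K = real CARD('n) * (Dstar * (2*C/d + 1))"
  have Tbound: "\<bar>\<Sum>i\<in>UNIV. T i\<bar> \<le> K"
  proof -
    have "\<bar>T i\<bar> \<le> Dstar * (2*C/d + 1)" for i
    proof -
      have "\<bar>T i\<bar> \<le> Dstar * (norm p + 1)" using Tb unfolding T_def by blast
      also have "\<dots> \<le> Dstar * (2*C/d + 1)" using np Dpos by (intro mult_left_mono) auto
      finally show ?thesis .
    qed
    then have "(\<Sum>i\<in>UNIV. \<bar>T i\<bar>) \<le> real (card (UNIV::'n set)) * (Dstar * (2*C/d + 1))"
      by (intro sum_bounded_above) auto
    moreover have "\<bar>\<Sum>i\<in>UNIV. T i\<bar> \<le> (\<Sum>i\<in>UNIV. \<bar>T i\<bar>)" by (rule sum_abs)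
    ultimately show ?thesis unfolding K_def by linarith
  qed
  have qH: "0 \<le> qf (\<lambda>i j. H$i$j) \<xi>" for \<xi>
    unfolding qf_vec H_def using cvx xS by blast
  have qM: "0 \<le> qf Mf \<xi>" for \<xi>
    using Mpos[rule_format, of p "\<chi> i. \<xi> i"] by (simp add: qf_def Mf_def)
  have S2pos: "0 \<le> S2" unfolding S2_def
    by (rule psd_frob[of "\<lambda>i j. H$i$j" Mf]) (use sym qH qM in auto)
  define B' where "B' = (\<lambda>i j. Dstar * (if i = j then 1 else 0) - Mf i j)"
  have qB: "0 \<le> qf B' \<xi>" for \<xi>
  proof -
    have "qf B' \<xi> = (\<Sum>i\<in>UNIV. \<Sum>j\<in>UNIV. (Dstar * (if i = j then 1 else 0)) * \<xi> i * \<xi> j) - qf Mf \<xi>"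
      unfolding qf_def B'_def by (simp add: left_diff_distrib sum_subtractf)
    also have "(\<Sum>i\<in>UNIV. \<Sum>j\<in>UNIV. (Dstar * (if i = j then 1 else 0)) * \<xi> i * \<xi> j)
        = Dstar * (\<Sum>i\<in>UNIV. \<xi> i * \<xi> i)"
      by (simp add: mult_if0 sum_distrib_left mult_ac)
    finally have "qf B' \<xi> = Dstar * (\<Sum>i\<in>UNIV. \<xi> i * \<xi> i) - qf Mf \<xi>" .
    moreover have "qf Mf \<xi> \<le> Dstar * norm ((\<chi> i. \<xi> i) :: real^'n) ^ 2"
      using Mle[rule_format, of p "\<chi> i. \<xi> i"] by (simp add: qf_def Mf_def)
    ultimately show ?thesis by (simp add: norm_sq_vec)
  qed
  have "0 \<le> (\<Sum>i\<in>UNIV. \<Sum>j\<in>UNIV. H$i$j * B' i j)"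
    by (rule psd_frob[of "\<lambda>i j. H$i$j" B']) (use sym qH qB in auto)
  also have "(\<Sum>i\<in>UNIV. \<Sum>j\<in>UNIV. H$i$j * B' i j) = Dstar * (\<Sum>i\<in>UNIV. H$i$i) - S2"
    unfolding B'_def S2_def
    by (simp add: right_diff_distrib sum_subtractf mult_if0 sum_distrib_left mult_ac)
  also have "(\<Sum>i\<in>UNIV. H$i$i) = laplacian u x" by (simp add: H_def hess_def laplacian_def)
  finally have S2le: "S2 \<le> Dstar * laplacian u x" by simp
  show ?thesis unfolding G using Tbound S2pos S2le unfolding K_def by (simp add: abs_le_iff)
qed


theorem lemma2p2:
  fixes \<Omega> \<Omega>0 :: "(real^'n) set"
    and \<phi> \<psi> \<rho> :: "real^'n \<Rightarrow> real"
    and F0 :: "real^'n \<Rightarrow> real \<Rightarrow> real"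
    and F1 :: "real^'n \<Rightarrow> real^'n \<Rightarrow> real"
    and \<eta> :: "real \<Rightarrow> real"
    and Dstar s \<epsilon>0 C :: real
  assumes n2: "CARD('n) \<ge> 2"
    and dom0: "bounded \<Omega>0" "open \<Omega>0" "convex \<Omega>0" "smooth_domain \<Omega>0"
    and dom: "bounded \<Omega>" "open \<Omega>" "convex \<Omega>" "smooth_domain \<Omega>"
    and sub: "closure \<Omega>0 \<subseteq> \<Omega>"
    and rho: "smooth \<rho>" "\<Omega> = {x. \<rho> x < 0}" "\<forall>x\<in>frontier \<Omega>. \<rho> x = 0 \<and> grad \<rho> x \<noteq> 0"
      "\<exists>c>0. \<forall>x\<in>closure \<Omega>. \<forall>\<xi>. \<xi> \<bullet> (hess \<rho> x *v \<xi>) \<ge> c * norm \<xi> ^ 2"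
    and phi: "Ck_bar 5 \<Omega> \<phi>" "convex_on (closure \<Omega>) \<phi>"
    and psi: "Ck_bar 3 \<Omega> \<psi>" "\<forall>x\<in>frontier \<Omega>. \<psi> x > 0"
    and eta: "continuous_on {0..} \<eta>" "mono_on {0..} \<eta>" "\<forall>t\<ge>0. \<eta> t \<ge> 0"
    and F0: "smooth (\<lambda>xz::(real^'n) \<times> real. F0 (fst xz) (snd xz))"
      "\<forall>x\<in>\<Omega>0. \<forall>z zt. (deriv (F0 x) z - deriv (F0 x) zt) * (z - zt) \<ge> 0"
      "\<forall>x\<in>\<Omega>0. \<forall>z. \<bar>F0 x z\<bar> + \<bar>deriv (F0 x) z\<bar> \<le> \<eta> \<bar>z\<bar>"
    and Dpos: "Dstar > 0"
    and F1: "smooth (\<lambda>xp::(real^'n) \<times> (real^'n). F1 (fst xp) (snd xp))"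
      "\<forall>x\<in>\<Omega>0. \<forall>p \<xi>. 0 \<le> (\<Sum>i\<in>UNIV. \<Sum>j\<in>UNIV.
            partial (axis i 1) (partial (axis j 1) (F1 x)) p * \<xi> $ i * \<xi> $ j)"
      "\<forall>x\<in>\<Omega>0. \<forall>p \<xi>. (\<Sum>i\<in>UNIV. \<Sum>j\<in>UNIV.
            partial (axis i 1) (partial (axis j 1) (F1 x)) p * \<xi> $ i * \<xi> $ j) \<le> Dstar * norm \<xi> ^ 2"
      "\<forall>x\<in>\<Omega>0. \<forall>p i. \<bar>partial (axis i 1) (\<lambda>y. partial (axis i 1) (F1 y) p) x\<bar> \<le> Dstar * (norm p + 1)"
    and s: "s > real CARD('n)"
    and eps0: "\<epsilon>0 > 0"
    and Linf: "\<forall>\<epsilon>. 0 < \<epsilon> \<and> \<epsilon> \<le> \<epsilon>0 \<longrightarrow> (\<forall>u. solves_P \<Omega> \<Omega>0 F0 F1 \<phi> \<psi> \<rho> s \<epsilon> u \<longrightarrow>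
                 (\<forall>x\<in>\<Omega>. \<bar>u x\<bar> \<le> C))"
  shows "\<exists>Ct>0. \<forall>\<epsilon> u. 0 < \<epsilon> \<and> \<epsilon> \<le> \<epsilon>0 \<and> solves_P \<Omega> \<Omega>0 F0 F1 \<phi> \<psi> \<rho> s \<epsilon> u \<longrightarrow>
           (\<forall>x\<in>\<Omega>0. - Ct - Dstar * laplacian u x \<le> f_eps \<Omega>0 F0 F1 \<phi> \<rho> \<epsilon> u x
                     \<and> f_eps \<Omega>0 F0 F1 \<phi> \<rho> \<epsilon> u x \<le> Ct)"

proof -
  have cc: "compact (closure \<Omega>0)" using dom0(1) by (simp add: compact_closure)
  obtain d where d: "d > 0" "(\<Union>x\<in>closure \<Omega>0. cball x d) \<subseteq> \<Omega>"
    using compact_subset_open_imp_cball_epsilon_subset[OF cc dom(2) sub] by blast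
  define K where "K = real CARD('n) * (Dstar * (2*\<bar>C\<bar>/d + 1))"
  define Ct where "Ct = \<bar>\<eta> \<bar>C\<bar>\<bar> + K + 1"
  have K0: "K \<ge> 0" unfolding K_def using Dpos d by (simp add: add_nonneg_nonneg)
  show ?thesis
  proof (rule exI[of _ Ct], intro conjI allI impI ballI)
    show "Ct > 0" unfolding Ct_def using K0 by simp
  next
    fix \<epsilon> u x
    assume Hy: "0 < \<epsilon> \<and> \<epsilon> \<le> \<epsilon>0 \<and> solves_P \<Omega> \<Omega>0 F0 F1 \<phi> \<psi> \<rho> s \<epsilon> u"
    assume x: "x \<in> \<Omega>0"
    have sol: "solves_P \<Omega> \<Omega>0 F0 F1 \<phi> \<psi> \<rho> s \<epsilon> u" using Hy by blast
    have uC: "\<forall>y\<in>\<Omega>. \<bar>u y\<bar> \<le> C" using Linf Hy by blast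
    have u3: "Ck 3 \<Omega> u" using sol by (simp add: solves_P_def Ck_bar_def)
    have uc: "uniformly_convex_fun \<Omega> u" using sol by (simp add: solves_P_def)
    then obtain l where l: "l > 0" "\<forall>y\<in>\<Omega>. \<forall>\<xi>. \<xi> \<bullet> (hess u y *v \<xi>) \<ge> l * norm \<xi> ^ 2"
      unfolding uniformly_convex_fun_def by blast
    have cvx: "\<forall>y\<in>\<Omega>. \<forall>\<xi>. \<xi> \<bullet> (hess u y *v \<xi>) \<ge> 0"
    proof (intro ballI allI)
      fix y \<xi> assume "y \<in> \<Omega>"
      then have "\<xi> \<bullet> (hess u y *v \<xi>) \<ge> l * norm \<xi> ^ 2" using l by blast
      moreover have "l * norm \<xi> ^ 2 \<ge> 0" using l by simp
      ultimately show "\<xi> \<bullet> (hess u y *v \<xi>) \<ge> 0" by linarith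
    qed
    have xc: "x \<in> closure \<Omega>0" using x closure_subset by blast
    have xO: "x \<in> \<Omega>" using sub xc by blast
    have C0: "C \<ge> 0" using uC xO by force
    have ball: "cball x d \<subseteq> \<Omega>" using d(2) xc by blast
    note pw = pointwise[OF dom(2) ball d(1) u3 cvx uC F1(1) bspec[OF F1(2) x] bspec[OF F1(3) x] bspec[OF F1(4) x] Dpos]
    have F0b: "\<bar>deriv (F0 x) (u x)\<bar> \<le> \<eta> C"
    proof -
      have "\<bar>F0 x (u x)\<bar> + \<bar>deriv (F0 x) (u x)\<bar> \<le> \<eta> \<bar>u x\<bar>" using F0(3) x by blast
      moreover have "\<eta> \<bar>u x\<bar> \<le> \<eta> C" using eta(2) C0 uC xO by (intro mono_onD[of "{0..}" \<eta>]) auto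
      ultimately show ?thesis by linarith
    qed
    have fe: "f_eps \<Omega>0 F0 F1 \<phi> \<rho> \<epsilon> u x = deriv (F0 x) (u x)
        - (\<Sum>i\<in>UNIV. partial (axis i 1) (\<lambda>y. partial (axis i 1) (F1 y) (grad u y)) x)"
      using x by (simp add: f_eps_def)
    have KC: "K = real CARD('n) * (Dstar * (2*C/d + 1))" unfolding K_def using C0 by simp
    have EC: "\<bar>\<eta> \<bar>C\<bar>\<bar> \<ge> \<eta> C" using C0 by simp
    show "- Ct - Dstar * laplacian u x \<le> f_eps \<Omega>0 F0 F1 \<phi> \<rho> \<epsilon> u x"
      unfolding fe Ct_def using pw F0b KC EC by (simp add: abs_le_iff; linarith)
    show "f_eps \<Omega>0 F0 F1 \<phi> \<rho> \<epsilon> u x \<le> Ct"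
      unfolding fe Ct_def using pw F0b KC EC by (simp add: abs_le_iff; linarith)
  qed
qed

end
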